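(* Let $n\ge1$ be an integer and $\frac n{n+1}<\beta<1$. Let $E=\{(u_1,\dots,u_n)\in\mathbb{R}^n:|u_i|\le1,\ i=1,\dots,n\}$ and $E^C=\mathbb{R}^n\setminus E$. Then $$I:=\int_{E^C}\frac{1}{|u_1\cdots u_n(u_1+\dots+u_n)|^\beta}\,du_1\cdots du_n<\infty.$$ *)

theory Defs
  imports "HOL-Analysis.Analysis"
begin

definition cubeE :: "(real ^ 'n) set" where
  "cubeE = {u. \<forall>i. \<bar>u $ i\<bar> \<le> 1}"

text \<open>The integrand 1 / |u_1 ... u_n (u_1 + ... + u_n)|^beta, valued in [0, infinity];
  it is infinite where the base vanishes (a Lebesgue-null set).\<close>
definition integrandI :: "real \<Rightarrow> real ^ 'n \<Rightarrow> ennreal" where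
  "integrandI \<beta> u =
     (let p = \<bar>(\<Prod>i\<in>UNIV. u $ i) * (\<Sum>i\<in>UNIV. u $ i)\<bar>
      in if p = 0 then \<infinity> else ennreal (1 / (p powr \<beta>)))"

end

theory Submission
  imports Defs
begin

definition phi :: "real \<Rightarrow> nat \<Rightarrow> real \<Rightarrow> ennreal" where
"phi b n t = (if t = 0 then \<infinity> else ennreal (\<bar>t\<bar> powr (-b) * max \<bar>t\<bar> 1 powr (-b / n)))"

lemma phi_meas[measurable]: "phi b n \<in> borel_measurable borel"
  unfolding phi_def by measurable

lemma phi_int_finite:
  assumes b0: "0 < b" and b1: "b < 1" and bn: "b + b / n > 1"
  shows "(\<integral>\<^sup>+ t. phi b n t \<partial>lborel) < \<infinity>"
proof -
  define g where "g = b + b / n"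
  define p1 where "p1 = (\<lambda>t::real. if t \<in> {0..1} then t powr (-b) else 0)"
  define p2 where "p2 = (\<lambda>t::real. if t \<in> {1..} then t powr (-g) else 0)"
  have h1: "(p1 has_integral (1 powr (-b+1) / (-b+1))) UNIV"
    unfolding p1_def has_integral_restrict_UNIV
    using has_integral_powr_from_0[of "-b" 1] b1 by simp
  have h2: "(p2 has_integral (-(1 powr (-g+1)) / (-g+1))) UNIV"
    unfolding p2_def has_integral_restrict_UNIV
    using has_integral_powr_to_inf[of "-g" 1] bn g_def by simp
  have m1[measurable]: "p1 \<in> borel_measurable borel" unfolding p1_def by measurable
  have m2[measurable]: "p2 \<in> borel_measurable borel" unfolding p2_def by measurable
  have nn1: "0 \<le> p1 x" for x unfolding p1_def by auto
  have nn2: "0 \<le> p2 x" for x unfolding p2_def by auto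
  have i1: "(\<integral>\<^sup>+ t. ennreal (p1 t) \<partial>lborel) < \<infinity>"
    using nn_integral_has_integral_lborel[OF m1 nn1 h1] by simp
  have i2: "(\<integral>\<^sup>+ t. ennreal (p2 t) \<partial>lborel) < \<infinity>"
    using nn_integral_has_integral_lborel[OF m2 nn2 h2] by simp
  have r1: "(\<integral>\<^sup>+ t. ennreal (p1 (-t)) \<partial>lborel) = (\<integral>\<^sup>+ t. ennreal (p1 t) \<partial>lborel)"
    using nn_integral_real_affine[of "\<lambda>t. ennreal (p1 t)" "-1" 0] by simp
  have r2: "(\<integral>\<^sup>+ t. ennreal (p2 (-t)) \<partial>lborel) = (\<integral>\<^sup>+ t. ennreal (p2 t) \<partial>lborel)"
    using nn_integral_real_affine[of "\<lambda>t. ennreal (p2 t)" "-1" 0] by simp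
  have pw: "phi b n t \<le> ennreal (p1 t) + ennreal (p2 t) + ennreal (p1 (-t)) + ennreal (p2 (-t))"
    if "t \<noteq> 0" for t
  proof -
    have key: "\<bar>t\<bar> powr (-b) * max \<bar>t\<bar> 1 powr (-b / n) \<le> p1 \<bar>t\<bar> + p2 \<bar>t\<bar>"
    proof (cases "\<bar>t\<bar> \<le> 1")
      case True
      then have "\<bar>t\<bar> powr (-b) * max \<bar>t\<bar> 1 powr (-b / n) = p1 \<bar>t\<bar>"
        unfolding p1_def by (auto simp: max_def)
      then show ?thesis using nn2[of "\<bar>t\<bar>"] by simp
    next
      case False
      then have "\<bar>t\<bar> powr (-b) * max \<bar>t\<bar> 1 powr (-b / n) = p2 \<bar>t\<bar>"
        unfolding p2_def g_def using that by (auto simp: max_def powr_add[symmetric])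
      then show ?thesis using nn1[of "\<bar>t\<bar>"] by simp
    qed
    have "phi b n t = ennreal (\<bar>t\<bar> powr (-b) * max \<bar>t\<bar> 1 powr (-b / n))"
      using that by (simp add: phi_def)
    also have "\<dots> \<le> ennreal (p1 \<bar>t\<bar> + p2 \<bar>t\<bar>)" using key by (rule ennreal_leI)
    also have "\<dots> \<le> ennreal (p1 t) + ennreal (p2 t) + ennreal (p1 (-t)) + ennreal (p2 (-t))"
    proof (cases "t \<ge> 0")
      case True
      then show ?thesis using nn1 nn2 by (simp add: ennreal_plus[symmetric] del: ennreal_plus add_increasing2)
    next
      case False
      then show ?thesis using nn1 nn2 by (simp add: ennreal_plus[symmetric] del: ennreal_plus)
    qed
    finally show ?thesis .
  qed
  have "(\<integral>\<^sup>+ t. phi b n t \<partial>lborel) \<le> (\<integral>\<^sup>+ t. ennreal (p1 t) + ennreal (p2 t) + ennreal (p1 (-t)) + ennreal (p2 (-t)) \<partial>lborel)"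
    using AE_lborel_singleton[of 0] by (intro nn_integral_mono_AE) (auto elim!: eventually_mono intro: pw)
  also have "\<dots> = (\<integral>\<^sup>+ t. ennreal (p1 t) \<partial>lborel) + (\<integral>\<^sup>+ t. ennreal (p2 t) \<partial>lborel) + (\<integral>\<^sup>+ t. ennreal (p1 (-t)) \<partial>lborel) + (\<integral>\<^sup>+ t. ennreal (p2 (-t)) \<partial>lborel)"
    by (simp add: nn_integral_add)
  also have "\<dots> < \<infinity>" using i1 i2 r1 r2 by (simp add: ennreal_add_less_top)
  finally show ?thesis .
qed


lemma shear_formula:
  fixes G :: "real^'n \<Rightarrow> ennreal" and j :: 'n
  assumes [measurable]: "G \<in> borel_measurable borel"
  shows "(\<integral>\<^sup>+u. G u \<partial>lborel) = (\<integral>\<^sup>+x. (\<integral>\<^sup>+y. G ((\<Sum>b\<in>Basis - {axis j 1}. x b *\<^sub>R b) + y *\<^sub>R axis j 1) \<partial>lborel) \<partial>(PiM (Basis - {axis j 1}) (\<lambda>_. lborel)))"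
proof -
  interpret product_sigma_finite "\<lambda>_::real^'n. lborel::real measure" by standard
  define bj :: "real^'n" where "bj = axis j 1"
  define I where "I = Basis - {bj}"
  have bjB: "bj \<in> Basis" unfolding bj_def by simp
  have BI: "Basis = insert bj I" using bjB unfolding I_def by auto
  have L: "(lborel :: (real^'n) measure) = distr (\<Pi>\<^sub>M b\<in>Basis. lborel) borel (\<lambda>f. \<Sum>b\<in>Basis. f b *\<^sub>R b)"
    by (rule lborel_eq)
  have "(\<integral>\<^sup>+u. G u \<partial>lborel) = (\<integral>\<^sup>+f. G (\<Sum>b\<in>Basis. f b *\<^sub>R b) \<partial>(\<Pi>\<^sub>M b\<in>Basis. lborel))"
    by (subst L) (simp add: nn_integral_distr)
  also have "\<dots> = (\<integral>\<^sup>+f. G (\<Sum>b\<in>Basis. f b *\<^sub>R b) \<partial>(\<Pi>\<^sub>M b\<in>insert bj I. lborel))"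
    using BI by simp
  also have "\<dots> = (\<integral>\<^sup>+ x. (\<integral>\<^sup>+ y. G (\<Sum>b\<in>Basis. (x(bj := y)) b *\<^sub>R b) \<partial>lborel) \<partial>(Pi\<^sub>M I (\<lambda>_. lborel)))"
    apply (rule product_nn_integral_insert)
    unfolding I_def apply simp apply simp
    using BI I_def by simp
  also have "\<dots> = (\<integral>\<^sup>+ x. (\<integral>\<^sup>+ y. G ((\<Sum>b\<in>I. x b *\<^sub>R b) + y *\<^sub>R bj) \<partial>lborel) \<partial>(Pi\<^sub>M I (\<lambda>_. lborel)))"
  proof (intro nn_integral_cong arg_cong[where f=G])
    fix x y
    have "(\<Sum>b\<in>Basis. (x(bj := y)) b *\<^sub>R b) = (x(bj := y)) bj *\<^sub>R bj + (\<Sum>b\<in>I. (x(bj := y)) b *\<^sub>R b)"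
      unfolding I_def using bjB by (simp add: sum.remove)
    also have "(\<Sum>b\<in>I. (x(bj := y)) b *\<^sub>R b) = (\<Sum>b\<in>I. x b *\<^sub>R b)"
      by (rule sum.cong) (auto simp: I_def)
    finally show "(\<Sum>b\<in>Basis. (x(bj := y)) b *\<^sub>R b) = (\<Sum>b\<in>I. x b *\<^sub>R b) + y *\<^sub>R bj" by simp
  qed
  finally show ?thesis unfolding I_def bj_def .
qed


definition shear :: "'n \<Rightarrow> real^'n \<Rightarrow> real^'n" where
  "shear j u = (\<chi> i. if i = j then (\<Sum>k\<in>UNIV. u$k) else u$i)"

lemma shear_meas[measurable]: "shear j \<in> borel_measurable borel"
  unfolding shear_def
  apply (intro borel_measurable_continuous_onI continuous_on_vec_lambda)
  subgoal for i by (cases "i = j") (auto intro!: continuous_intros)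
  done

lemma Basis_minus_axis: "(Basis :: (real^'n) set) - {axis j 1} = (\<lambda>i. axis i 1) ` (- {j})"
  by (auto simp: Basis_vec_def axis_eq_axis)

lemma inj_axis1: "inj_on (\<lambda>i::'n::finite. axis i (1::real)) A"
  by (auto simp: inj_on_def axis_eq_axis)

lemma R0_comp:
  "(\<Sum>b\<in>Basis - {axis j 1}. x b *\<^sub>R b :: real^'n) $ k = (if k = j then 0 else x (axis k 1))"
proof -
  have "(\<Sum>b\<in>Basis - {axis j 1}. x b *\<^sub>R b :: real^'n) $ k = (\<Sum>i\<in>-{j}. x (axis i 1) * (axis i 1 :: real^'n) $ k)"
    unfolding Basis_minus_axis by (simp add: sum.reindex[OF inj_axis1] sum_component)
  also have "\<dots> = (\<Sum>i\<in>-{j}. if i = k then x (axis k 1) else 0)"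
    by (rule sum.cong) (auto simp: axis_def)
  also have "\<dots> = (if k = j then 0 else x (axis k 1))"
    by (simp add: sum.delta')
  finally show ?thesis .
qed

lemma sum_minus_axis:
  "(\<Sum>b\<in>Basis - {axis j 1}. x b) = (\<Sum>i\<in>-{j::'n::finite}. x (axis i (1::real)))"
  unfolding Basis_minus_axis by (simp add: sum.reindex[OF inj_axis1])

lemma shear_R0:
  "shear j ((\<Sum>b\<in>Basis - {axis j 1}. x b *\<^sub>R b) + y *\<^sub>R axis j 1)
   = (\<Sum>b\<in>Basis - {axis j 1}. x b *\<^sub>R b) + (y + (\<Sum>b\<in>Basis - {axis j 1}. x b)) *\<^sub>R axis j (1::real)"
proof -
  have comp: "((\<Sum>b\<in>Basis - {axis j 1}. x b *\<^sub>R b) + z *\<^sub>R axis j (1::real)) $ k = (if k = j then z else x (axis k 1))" for k z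
    by (simp only: vector_add_component vector_scaleR_component R0_comp) (simp add: axis_def)
  have s: "(\<Sum>k\<in>UNIV. ((\<Sum>b\<in>Basis - {axis j 1}. x b *\<^sub>R b) + y *\<^sub>R axis j (1::real)) $ k)
     = y + (\<Sum>b\<in>Basis - {axis j 1}. x b)"
  proof -
    have "(\<Sum>k\<in>UNIV. ((\<Sum>b\<in>Basis - {axis j 1}. x b *\<^sub>R b) + y *\<^sub>R axis j (1::real)) $ k)
       = (\<Sum>k\<in>UNIV. (if k = j then y else x (axis k 1)))"
      by (rule sum.cong) (simp_all only: comp)
    also have "\<dots> = y + (\<Sum>k\<in>UNIV - {j}. x (axis k 1))"
      by (subst sum.remove[of _ j]) (auto intro!: sum.cong)
    finally show ?thesis by (simp add: sum_minus_axis Compl_eq_Diff_UNIV)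
  qed
  show ?thesis
    unfolding vec_eq_iff shear_def vec_lambda_beta comp s by simp
qed

lemma shear_inv:
  fixes F :: "real^'n \<Rightarrow> ennreal"
  assumes [measurable]: "F \<in> borel_measurable borel"
  shows "(\<integral>\<^sup>+u. F (shear j u) \<partial>lborel) = (\<integral>\<^sup>+u. F u \<partial>lborel)"
proof -
  have "(\<integral>\<^sup>+u. F (shear j u) \<partial>lborel) = (\<integral>\<^sup>+x. (\<integral>\<^sup>+y. F (shear j ((\<Sum>b\<in>Basis - {axis j 1}. x b *\<^sub>R b) + y *\<^sub>R axis j 1)) \<partial>lborel) \<partial>(PiM (Basis - {axis j 1}) (\<lambda>_. lborel)))"
    by (rule shear_formula) measurable
  also have "\<dots> = (\<integral>\<^sup>+x. (\<integral>\<^sup>+y. F ((\<Sum>b\<in>Basis - {axis j 1}. x b *\<^sub>R b) + y *\<^sub>R axis j 1) \<partial>lborel) \<partial>(PiM (Basis - {axis j 1}) (\<lambda>_. lborel)))"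
  proof (rule nn_integral_cong)
    fix x :: "real^'n \<Rightarrow> real"
    define c where "c = (\<Sum>b\<in>Basis - {axis j 1}. x b)"
    define R where "R = (\<Sum>b\<in>Basis - {axis j 1}. x b *\<^sub>R b)"
    have m: "(\<lambda>y. F (R + y *\<^sub>R axis j 1)) \<in> borel_measurable borel" by measurable
    have "(\<integral>\<^sup>+y. F (shear j (R + y *\<^sub>R axis j 1)) \<partial>lborel) = (\<integral>\<^sup>+y. F (R + (c + 1 * y) *\<^sub>R axis j 1) \<partial>lborel)"
      unfolding R_def c_def shear_R0 by (simp add: add.commute)
    also have "\<dots> = (\<integral>\<^sup>+y. F (R + y *\<^sub>R axis j 1) \<partial>lborel)"
      using nn_integral_real_affine[OF m, of 1 c] by simp
    finally show "(\<integral>\<^sup>+y. F (shear j ((\<Sum>b\<in>Basis - {axis j 1}. x b *\<^sub>R b) + y *\<^sub>R axis j 1)) \<partial>lborel) = (\<integral>\<^sup>+y. F ((\<Sum>b\<in>Basis - {axis j 1}. x b *\<^sub>R b) + y *\<^sub>R axis j 1) \<partial>lborel)"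
      unfolding R_def .
  qed
  also have "\<dots> = (\<integral>\<^sup>+u. F u \<partial>lborel)"
    by (rule shear_formula[symmetric]) measurable
  finally show ?thesis .
qed


lemma phi_pos: "0 < b \<Longrightarrow> 0 < phi b n t"
  by (simp add: phi_def)

lemma Phi_int:
  "(\<integral>\<^sup>+v. (\<Prod>i\<in>UNIV. phi b n ((v::real^'n)$i)) \<partial>lborel) = (\<integral>\<^sup>+t. phi b n t \<partial>lborel) ^ CARD('n)"
proof -
  have B: "(Basis :: (real^'n) set) = (\<lambda>i. axis i 1) ` UNIV"
    by (auto simp: Basis_vec_def)
  have eq: "(\<Prod>i\<in>UNIV. phi b n ((v::real^'n)$i)) = (\<Prod>bb\<in>Basis. phi b n (v \<bullet> bb))" for v
    unfolding B by (simp add: prod.reindex[OF inj_axis1] cart_eq_inner_axis)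
  have "(\<integral>\<^sup>+v. (\<Prod>i\<in>UNIV. phi b n ((v::real^'n)$i)) \<partial>lborel) = (\<Prod>bb\<in>(Basis::(real^'n) set). (\<integral>\<^sup>+t. phi b n t \<partial>lborel))"
    unfolding eq by (rule nn_integral_lborel_prod) auto
  also have "\<dots> = (\<integral>\<^sup>+t. phi b n t \<partial>lborel) ^ CARD('n)"
    by simp
  finally show ?thesis .
qed

lemma core:
  fixes v :: "real^'n" and w :: real
  assumes vw: "\<And>i. \<bar>v$i\<bar> \<le> \<bar>w\<bar>" and w1: "1 \<le> \<bar>w\<bar>" and b0: "0 < b" and nd: "n = CARD('n)"
  shows "(if \<bar>\<Prod>i\<in>UNIV. v$i\<bar> * \<bar>w\<bar> = 0 then \<infinity> else ennreal (1 / ((\<bar>\<Prod>i\<in>UNIV. v$i\<bar> * \<bar>w\<bar>) powr b)))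
         \<le> (\<Prod>i\<in>UNIV. phi b n (v$i))"
proof (cases "\<exists>i. v$i = 0")
  case True
  then obtain i where i: "v$i = 0" by blast
  have "(\<Prod>i\<in>UNIV. phi b n (v$i)) = phi b n (v$i) * (\<Prod>k\<in>UNIV - {i}. phi b n (v$k))"
    by (simp add: prod.remove)
  also have "\<dots> = \<infinity>"
  proof -
    have "(\<Prod>k\<in>UNIV - {i}. phi b n (v$k)) \<noteq> 0"
      using phi_pos[OF b0] by (auto simp: prod_zero_iff) (metis less_irrefl)
    then show ?thesis using i by (simp add: phi_def)
  qed
  finally show ?thesis by simp
next
  case False
  have n0: "0 < n" using nd by simp
  have w0: "0 < \<bar>w\<bar>" using w1 by simp
  have P0: "0 < \<bar>\<Prod>i\<in>UNIV. v$i\<bar>" using False by (simp add: prod_zero_iff)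
  have nn: "0 \<le> \<bar>t\<bar> powr (-b) * max \<bar>t\<bar> 1 powr (-b / n)" for t by simp
  have R: "(\<Prod>i\<in>UNIV. phi b n (v$i)) = ennreal (\<Prod>i\<in>UNIV. \<bar>v$i\<bar> powr (-b) * max \<bar>v$i\<bar> 1 powr (-b / n))"
    using False by (simp add: phi_def prod_ennreal nn)
  have wpow: "\<bar>w\<bar> powr (-b) = (\<Prod>i\<in>(UNIV::'n set). \<bar>w\<bar> powr (-b / n))"
    using n0 nd w0 by (simp add: powr_power)
  have le1: "(\<Prod>i\<in>(UNIV::'n set). \<bar>w\<bar> powr (-b / n)) \<le> (\<Prod>i\<in>UNIV. max \<bar>v$i\<bar> 1 powr (-b / n))"
  proof (rule prod_mono)
    fix i :: 'n
    show "0 \<le> \<bar>w\<bar> powr (-b / n) \<and> \<bar>w\<bar> powr (-b / n) \<le> max \<bar>v$i\<bar> 1 powr (-b / n)"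
      using b0 n0 vw[of i] w1 by (auto intro!: powr_mono2' simp: divide_nonneg_pos)
  qed
  have "1 / ((\<bar>\<Prod>i\<in>UNIV. v$i\<bar> * \<bar>w\<bar>) powr b) = (\<Prod>i\<in>UNIV. \<bar>v$i\<bar> powr (-b)) * \<bar>w\<bar> powr (-b)"
    by (simp add: powr_minus_divide powr_mult abs_prod prod_powr_distrib prod_dividef)
  also have "\<dots> \<le> (\<Prod>i\<in>UNIV. \<bar>v$i\<bar> powr (-b)) * (\<Prod>i\<in>UNIV. max \<bar>v$i\<bar> 1 powr (-b / n))"
    unfolding wpow by (rule mult_left_mono[OF le1]) (simp add: prod_nonneg)
  also have "\<dots> = (\<Prod>i\<in>UNIV. \<bar>v$i\<bar> powr (-b) * max \<bar>v$i\<bar> 1 powr (-b / n))"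
    by (simp add: prod.distrib)
  finally have "ennreal (1 / ((\<bar>\<Prod>i\<in>UNIV. v$i\<bar> * \<bar>w\<bar>) powr b)) \<le> (\<Prod>i\<in>UNIV. phi b n (v$i))"
    unfolding R by (rule ennreal_leI)
  then show ?thesis using P0 w0 by simp
qed


theorem lemma5p6:
  fixes \<beta> :: real
  assumes "real CARD('n) / (real CARD('n) + 1) < \<beta>" and "\<beta> < 1"
  shows "(\<integral>\<^sup>+ u \<in> - (cubeE :: (real ^ 'n) set). integrandI \<beta> u \<partial>lborel) < \<infinity>"
proof -
  define n where "n = CARD('n)"
  have n0: "0 < n" unfolding n_def by simp
  have b0: "0 < \<beta>" using assms(1) n0 unfolding n_def
    by (smt (verit) divide_nonneg_pos of_nat_0_le_iff)
  have bn: "\<beta> + \<beta> / n > 1"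
  proof -
    have "real n < \<beta> * (real n + 1)" using assms(1) n0 unfolding n_def
      by (simp add: divide_less_eq add_pos_pos)
    then show ?thesis using n0 by (simp add: field_simps)
  qed
  define Phi where "Phi = (\<lambda>v::real^'n. \<Prod>i\<in>UNIV. phi \<beta> n (v$i))"
  have Phim[measurable]: "Phi \<in> borel_measurable borel" unfolding Phi_def by measurable
  have pw: "integrandI \<beta> u \<le> Phi u + (\<Sum>j\<in>UNIV. Phi (shear j u))" if u: "u \<notin> cubeE" for u :: "real^'n"
  proof -
    obtain i0 where i0: "\<bar>u$i0\<bar> > 1" using u unfolding cubeE_def by (auto simp: not_le)
    have "Max (range (\<lambda>i. \<bar>u$i\<bar>)) \<in> range (\<lambda>i. \<bar>u$i\<bar>)" by (rule Max_in) auto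
    then obtain j0 where j0: "\<bar>u$j0\<bar> = Max (range (\<lambda>i. \<bar>u$i\<bar>))" by (metis (no_types, lifting) imageE)
    have jmax: "\<bar>u$i\<bar> \<le> \<bar>u$j0\<bar>" for i unfolding j0 by (rule Max_ge) auto
    have j1: "1 \<le> \<bar>u$j0\<bar>" using jmax[of i0] i0 by simp
    define s where "s = (\<Sum>k\<in>UNIV. u$k)"
    have g: "integrandI \<beta> u = (if \<bar>\<Prod>i\<in>UNIV. u$i\<bar> * \<bar>s\<bar> = 0 then \<infinity> else ennreal (1 / ((\<bar>\<Prod>i\<in>UNIV. u$i\<bar> * \<bar>s\<bar>) powr \<beta>)))"
      unfolding integrandI_def s_def Let_def abs_mult ..
    show ?thesis
    proof (cases "\<bar>u$j0\<bar> \<le> \<bar>s\<bar>")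
      case True
      have "integrandI \<beta> u \<le> Phi u"
        unfolding g Phi_def
        by (rule core) (use True jmax j1 b0 n_def order_trans in \<open>auto intro: order_trans\<close>)
      then show ?thesis by (simp add: add_increasing2)
    next
      case False
      define v where "v = shear j0 u"
      have vc: "v$i = (if i = j0 then s else u$i)" for i
        unfolding v_def shear_def s_def by simp
      have pv: "(\<Prod>i\<in>UNIV. v$i) = s * (\<Prod>i\<in>UNIV - {j0}. u$i)"
        by (simp add: prod.remove[of _ j0] vc)
      have pu: "(\<Prod>i\<in>UNIV. u$i) = u$j0 * (\<Prod>i\<in>UNIV - {j0}. u$i)"
        by (simp add: prod.remove[of _ j0])
      have eq: "\<bar>\<Prod>i\<in>UNIV. u$i\<bar> * \<bar>s\<bar> = \<bar>\<Prod>i\<in>UNIV. v$i\<bar> * \<bar>u$j0\<bar>"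
        unfolding pu pv abs_mult by simp
      have "integrandI \<beta> u \<le> Phi v"
        unfolding g eq Phi_def
        by (rule core) (use False jmax j1 b0 n_def vc in auto)
      also have "\<dots> \<le> (\<Sum>j\<in>UNIV. Phi (shear j u))"
        unfolding v_def by (rule member_le_sum) auto
      finally show ?thesis by (simp add: add_increasing)
    qed
  qed
  have "(\<integral>\<^sup>+ u \<in> - (cubeE :: (real ^ 'n) set). integrandI \<beta> u \<partial>lborel)
       \<le> (\<integral>\<^sup>+ u. Phi u + (\<Sum>j\<in>UNIV. Phi (shear j u)) \<partial>lborel)"
    by (rule nn_integral_mono) (auto simp: indicator_def pw)
  also have "\<dots> = (\<integral>\<^sup>+ u. Phi u \<partial>lborel) + (\<Sum>j\<in>UNIV. (\<integral>\<^sup>+ u. Phi (shear j u) \<partial>lborel))"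
    by (simp add: nn_integral_add nn_integral_sum)
  also have "\<dots> = (\<integral>\<^sup>+ u. Phi u \<partial>lborel) + (\<Sum>j\<in>(UNIV::'n set). (\<integral>\<^sup>+ u. Phi u \<partial>lborel))"
    by (simp add: shear_inv)
  also have "\<dots> < \<infinity>"
  proof -
    have "(\<integral>\<^sup>+ u. Phi u \<partial>lborel) = (\<integral>\<^sup>+t. phi \<beta> n t \<partial>lborel) ^ CARD('n)"
      unfolding Phi_def by (rule Phi_int)
    also have "\<dots> < \<infinity>" using phi_int_finite[OF b0 assms(2) bn]
      by (simp add: power_less_top_ennreal)
    finally have f: "(\<integral>\<^sup>+ u. Phi u \<partial>lborel) < \<infinity>" .
    then show ?thesis by (simp add: ennreal_add_less_top ennreal_mult_less_top of_nat_less_top)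
  qed
  finally show ?thesis .
qed

end
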